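(* Let $P$ and $Q$ be finitely generated graded rank one projective right $A$-modules, given as graded submodules of $Q_{\mathrm{gr}}(A)$. Then every homomorphism $P\to Q$ in $\operatorname{gr}A$ is given by left multiplication by some element of $\Bbbk(z)$, and $\operatorname{Hom}_{\operatorname{gr}A}(P,Q)$ is a free left $\Bbbk[z]$-module of rank one.
   Context: $\Bbbk$ algebraically closed of characteristic $0$; $\sigma(z)=z+1$. For $\alpha\in\Bbbk$, $f=z(z+\alpha)$, $A=A(f)$ generated by $\Bbbk[z],x,y$ with $xz=(z+1)x$, $yz=(z-1)y$, $xy=f$, $yx=\sigma^{-1}(f)$, graded by $\deg x=1,\deg y=-1,\deg z=0$; $\operatorname{gr}A$: finitely generated graded right $A$-modules with degree-$0$ maps. $Q_{\mathrm{gr}}(A)=\Bbbk(z)[x,x^{-1};\sigma]$ is the graded quotient ring. A rank one graded projective module is a nonzero finitely generated graded projective right $A$-module isomorphic to a graded submodule of $Q_{\mathrm{gr}}(A)$. $\operatorname{Hom}_{\operatorname{gr}A}(P,Q)$ is a left $\Bbbk[z]$-module via left multiplication of $\Bbbk[z]\subseteq\Bbbk(z)$ on the multiplier. *)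

theory Defs
  imports "HOL-Computational_Algebra.Polynomial_Factorial" "HOL-Library.Function_Algebras"
begin

type_synonym 'k rf = "'k poly fract"

text \<open>Elements of the graded quotient ring Q_gr(A) = k(z)[x,x^-1;sigma]: a function
  n |-> coefficient of x^n (finitely supported), i.e. u = sum_n u(n) x^n.\<close>
type_synonym 'k qgr = "int \<Rightarrow> 'k rf"

definition Qgr :: "'k::field qgr set" where
  "Qgr = {u. finite {n. u n \<noteq> 0}}"

text \<open>sigma^m on k(z): z |-> z + m, i.e. p(z)/q(z) |-> p(z+m)/q(z+m).\<close>
definition shiftp :: "int \<Rightarrow> 'k::field_char_0 poly \<Rightarrow> 'k poly" where
  "shiftp m p = pcompose p [:of_int m, 1:]"

definition sig :: "int \<Rightarrow> 'k::field_char_0 rf \<Rightarrow> 'k rf" where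
  "sig m r = (let (p, q) = (SOME (p, q). q \<noteq> 0 \<and> r = Fract p q)
              in Fract (shiftp m p) (shiftp m q))"

text \<open>Multiplication in Q_gr: (a x^m)(b x^n) = a sigma^m(b) x^(m+n).\<close>
definition qmul :: "'k::field_char_0 qgr \<Rightarrow> 'k qgr \<Rightarrow> 'k qgr" where
  "qmul u v = (\<lambda>n. \<Sum>m\<in>{m. u m \<noteq> 0}. u m * sig m (v (n - m)))"

definition hel :: "'k::field rf \<Rightarrow> int \<Rightarrow> 'k qgr" where
  "hel c n = (\<lambda>k. if k = n then c else 0)"

definition fpol :: "'k::field_char_0 \<Rightarrow> 'k poly" where
  "fpol \<alpha> = [:0, \<alpha>, 1:]"

definition xq :: "'k::field_char_0 qgr" where "xq = hel 1 1"

text \<open>y = x^-1 f = sigma^-1(f) x^-1 (so that xy = f and yx = sigma^-1(f)).\<close>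
definition yq :: "'k::field_char_0 \<Rightarrow> 'k qgr" where
  "yq \<alpha> = hel (sig (-1) (to_fract (fpol \<alpha>))) (-1)"

inductive_set Aset :: "'k::field_char_0 \<Rightarrow> 'k qgr set" for \<alpha> :: 'k where
  poly: "hel (to_fract p) 0 \<in> Aset \<alpha>"
| gen_x: "xq \<in> Aset \<alpha>"
| gen_y: "yq \<alpha> \<in> Aset \<alpha>"
| add: "a \<in> Aset \<alpha> \<Longrightarrow> b \<in> Aset \<alpha> \<Longrightarrow> a + b \<in> Aset \<alpha>"
| mul: "a \<in> Aset \<alpha> \<Longrightarrow> b \<in> Aset \<alpha> \<Longrightarrow> qmul a b \<in> Aset \<alpha>"

text \<open>u is homogeneous of degree n (0 is homogeneous of every degree).\<close>
definition is_hom :: "int \<Rightarrow> 'k::field qgr \<Rightarrow> bool" where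
  "is_hom n u \<longleftrightarrow> (\<forall>k. k \<noteq> n \<longrightarrow> u k = 0)"

definition grsub :: "'k::field_char_0 \<Rightarrow> 'k qgr set \<Rightarrow> bool" where
  "grsub \<alpha> P \<longleftrightarrow> P \<subseteq> Qgr \<and> 0 \<in> P \<and> (\<forall>u\<in>P. \<forall>v\<in>P. u + v \<in> P)
     \<and> (\<forall>u\<in>P. \<forall>a\<in>Aset \<alpha>. qmul u a \<in> P) \<and> (\<forall>u\<in>P. \<forall>n. hel (u n) n \<in> P)"

definition fin_gen :: "'k::field_char_0 \<Rightarrow> 'k qgr set \<Rightarrow> bool" where
  "fin_gen \<alpha> P \<longleftrightarrow> (\<exists>G. finite G \<and> G \<subseteq> P \<and>
     P = {(\<Sum>g\<in>G. qmul g (c g)) | c. \<forall>g\<in>G. c g \<in> Aset \<alpha>})"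

text \<open>Degree-0 right A-module map phi : M -> N between graded right A-modules,
  each given by a carrier, a right action of A and a homogeneity predicate.\<close>
definition grAmap ::
  "'k::field_char_0 \<Rightarrow> ('m::plus \<Rightarrow> 'k qgr \<Rightarrow> 'm) \<Rightarrow> (int \<Rightarrow> 'm \<Rightarrow> bool) \<Rightarrow> 'm set \<Rightarrow>
   ('n::plus \<Rightarrow> 'k qgr \<Rightarrow> 'n) \<Rightarrow> (int \<Rightarrow> 'n \<Rightarrow> bool) \<Rightarrow> 'n set \<Rightarrow> ('m \<Rightarrow> 'n) \<Rightarrow> bool" where
  "grAmap \<alpha> actM homM M actN homN N \<phi> \<longleftrightarrow>
     (\<forall>u\<in>M. \<phi> u \<in> N) \<and> (\<forall>u\<in>M. \<forall>v\<in>M. \<phi> (u + v) = \<phi> u + \<phi> v)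
     \<and> (\<forall>u\<in>M. \<forall>a\<in>Aset \<alpha>. \<phi> (actM u a) = actN (\<phi> u) a)
     \<and> (\<forall>u\<in>M. \<forall>n. homM n u \<longrightarrow> homN n (\<phi> u))"

text \<open>Graded free module of finite rank m: direct sum of the shifted copies
  x^(e i) A of A (x^e A is isomorphic to the shift A(-e) in gr A).\<close>
definition Free :: "'k::field_char_0 \<Rightarrow> nat \<Rightarrow> (nat \<Rightarrow> int) \<Rightarrow> (nat \<Rightarrow> 'k qgr) set" where
  "Free \<alpha> m e = {w. (\<forall>i<m. w i \<in> qmul (hel 1 (e i)) ` Aset \<alpha>) \<and> (\<forall>i\<ge>m. w i = 0)}"

definition actF :: "(nat \<Rightarrow> 'k::field_char_0 qgr) \<Rightarrow> 'k qgr \<Rightarrow> (nat \<Rightarrow> 'k qgr)" where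
  "actF w a = (\<lambda>i. qmul (w i) a)"

definition homF :: "int \<Rightarrow> (nat \<Rightarrow> 'k::field qgr) \<Rightarrow> bool" where
  "homF n w \<longleftrightarrow> (\<forall>i. is_hom n (w i))"

text \<open>Projective in gr A: a retract (direct summand) of a f.g. graded free module.\<close>
definition gr_projective :: "'k::field_char_0 \<Rightarrow> 'k qgr set \<Rightarrow> bool" where
  "gr_projective \<alpha> P \<longleftrightarrow> (\<exists>m e s \<pi>.
      grAmap \<alpha> qmul is_hom P actF homF (Free \<alpha> m e) s
    \<and> grAmap \<alpha> actF homF (Free \<alpha> m e) qmul is_hom P \<pi>
    \<and> (\<forall>u\<in>P. \<pi> (s u) = u))"

definition rank_one_proj :: "'k::field_char_0 \<Rightarrow> 'k qgr set \<Rightarrow> bool" where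
  "rank_one_proj \<alpha> P \<longleftrightarrow> grsub \<alpha> P \<and> P \<noteq> {0} \<and> fin_gen \<alpha> P \<and> gr_projective \<alpha> P"

definition HomGr :: "'k::field_char_0 \<Rightarrow> 'k qgr set \<Rightarrow> 'k qgr set \<Rightarrow> ('k qgr \<Rightarrow> 'k qgr) set" where
  "HomGr \<alpha> P Q = {\<phi>. grAmap \<alpha> qmul is_hom P qmul is_hom Q \<phi>}"

end

theory Submission
  imports Defs
begin


lemma shiftp_add: "shiftp m (p + q) = shiftp m p + shiftp m q"
  by (simp add: shiftp_def pcompose_add)
lemma shiftp_mult: "shiftp m (p * q) = shiftp m p * shiftp m q"
  by (simp add: shiftp_def pcompose_mult)
lemma shiftp_1[simp]: "shiftp m 1 = 1"
  by (simp add: shiftp_def pcompose_1)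
lemma shiftp_0[simp]: "shiftp m 0 = 0"
  by (simp add: shiftp_def)
lemma shiftp_shiftp: "shiftp m (shiftp n p) = shiftp (m + n) p"
proof -
  have "pcompose [:of_int n, 1:] [:of_int m, 1:] = [:of_int (m+n), 1::'a:]"
    by (simp add: pcompose_pCons algebra_simps)
  thus ?thesis unfolding shiftp_def by (metis pcompose_assoc)
qed
lemma shiftp_zero_shift[simp]: "shiftp 0 p = p"
  by (simp add: shiftp_def)
lemma shiftp_inv[simp]: "shiftp m (shiftp (-m) p) = p"
  by (simp add: shiftp_shiftp)
lemma shiftp_eq0[simp]: "shiftp m p = 0 \<longleftrightarrow> p = (0::'a::field_char_0 poly)"
  unfolding shiftp_def by (rule pcompose_eq_0_iff) simp

lemma sig_Fract:
  fixes p q :: "'a::field_char_0 poly"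
  assumes "q \<noteq> 0" shows "sig m (Fract p q) = Fract (shiftp m p) (shiftp m q)"
proof -
  define pq where "pq = (SOME (p', q'). q' \<noteq> 0 \<and> Fract p q = Fract p' q')"
  have ex: "\<exists>x. (\<lambda>(p', q'). q' \<noteq> 0 \<and> Fract p q = Fract p' q') x"
    using assms by auto
  have h: "(\<lambda>(p', q'). q' \<noteq> 0 \<and> Fract p q = Fract p' q') pq"
    unfolding pq_def by (rule someI_ex[OF ex])
  obtain p' q' where pq: "pq = (p', q')" by (cases pq)
  from h pq have q': "q' \<noteq> 0" and e: "Fract p q = Fract p' q'" by auto
  from e have "p * q' = p' * q" using assms q' by (simp add: eq_fract)
  hence "shiftp m p * shiftp m q' = shiftp m p' * shiftp m q" by (simp add: shiftp_mult[symmetric])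
  hence "Fract (shiftp m p') (shiftp m q') = Fract (shiftp m p) (shiftp m q)"
    using assms q' by (simp add: eq_fract)
  thus ?thesis unfolding sig_def pq_def[symmetric] pq by simp
qed

lemma sig_to_fract[simp]: "sig m (to_fract p) = to_fract (shiftp m p)"
  by (simp add: to_fract_def sig_Fract)
lemma sig_0[simp]: "sig m 0 = 0"
  using sig_to_fract[of m 0] by simp
lemma sig_1[simp]: "sig m 1 = 1"
  using sig_to_fract[of m 1] by simp
lemma sig_mult: "sig m (a * b) = sig m a * sig m b"
  by (cases a; cases b) (simp add: sig_Fract shiftp_mult)
lemma sig_add: "sig m (a + b) = sig m a + sig m b"
  by (cases a; cases b) (simp add: sig_Fract shiftp_mult shiftp_add)
lemma sig_eq0[simp]: "sig m a = 0 \<longleftrightarrow> a = 0"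
  by (cases a) (simp add: sig_Fract eq_fract Zero_fract_def)
lemma sig_zero_shift[simp]: "sig 0 a = a"
  by (cases a) (simp add: sig_Fract)
lemma sig_sig: "sig m (sig n a) = sig (m + n) a"
  by (cases a) (simp add: sig_Fract shiftp_shiftp)


lemma hel_0[simp]: "hel 0 n = 0"
  by (auto simp: hel_def)

lemma sum_fun_apply: "(\<Sum>i\<in>S. f i) k = (\<Sum>i\<in>S. f i k)"
  by (induction S rule: infinite_finite_induct) auto

lemma qmul_hel: "qmul (hel a m) (hel b n) = hel (a * sig m b) (m + n)"
proof (cases "a = 0")
  case True thus ?thesis by (simp add: qmul_def fun_eq_iff)
next
  case False
  hence "{k. hel a m k \<noteq> 0} = {m}" by (auto simp: hel_def)
  thus ?thesis using False by (auto simp: qmul_def hel_def fun_eq_iff)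
qed

lemma qmul_lmul: "qmul (\<lambda>k. \<theta> * u k) a = (\<lambda>n. \<theta> * qmul u a n)"
proof (cases "\<theta> = 0")
  case True thus ?thesis by (simp add: qmul_def fun_eq_iff)
next
  case False
  hence "{k. \<theta> * u k \<noteq> 0} = {k. u k \<noteq> 0}" by auto
  thus ?thesis using False by (simp add: qmul_def sum_distrib_left mult.assoc)
qed

lemma lmul_hel: "qmul (hel \<theta> 0) w = (\<lambda>k. \<theta> * w k)"
proof (cases "\<theta> = 0")
  case True thus ?thesis by (simp add: qmul_def fun_eq_iff)
next
  case False
  hence "{k. hel \<theta> 0 k \<noteq> 0} = {0}" by (auto simp: hel_def)
  thus ?thesis using False by (auto simp: qmul_def hel_def fun_eq_iff)
qed

lemma qgr_decomp:
  assumes "u \<in> Qgr" shows "u = (\<Sum>n\<in>{n. u n \<noteq> 0}. hel (u n) n)"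
proof
  fix k
  have fin: "finite {n. u n \<noteq> 0}" using assms by (simp add: Qgr_def)
  have "(\<Sum>n\<in>{n. u n \<noteq> 0}. hel (u n) n) k = (\<Sum>n\<in>{n. u n \<noteq> 0}. if k = n then u n else 0)"
    by (simp add: sum_fun_apply hel_def)
  also have "\<dots> = u k" using fin by (simp add: sum.delta sum.delta')
  finally show "u k = (\<Sum>n\<in>{n. u n \<noteq> 0}. hel (u n) n) k" by simp
qed

lemma is_hom_hel: "is_hom n u \<Longrightarrow> u = hel (u n) n"
  by (auto simp: is_hom_def hel_def fun_eq_iff)

lemma is_hom_hel2: "is_hom n (hel c n)"
  by (auto simp: is_hom_def hel_def)

definition ispoly :: "'k::field_char_0 rf \<Rightarrow> bool" where
  "ispoly r \<longleftrightarrow> (\<exists>p. r = to_fract p)"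

lemma ispoly_add: "ispoly a \<Longrightarrow> ispoly b \<Longrightarrow> ispoly (a + b)"
  by (auto simp: ispoly_def intro: exI[of _ "_ + _"])
lemma ispoly_mult: "ispoly a \<Longrightarrow> ispoly b \<Longrightarrow> ispoly (a * b)"
  by (auto simp: ispoly_def intro: exI[of _ "_ * _"])
lemma ispoly_0[simp]: "ispoly 0" by (auto simp: ispoly_def intro: exI[of _ 0])
lemma ispoly_1[simp]: "ispoly 1" by (auto simp: ispoly_def intro: exI[of _ 1])
lemma ispoly_sig: "ispoly a \<Longrightarrow> ispoly (sig m a)"
  by (auto simp: ispoly_def)
lemma ispoly_sum: "(\<And>i. i \<in> S \<Longrightarrow> ispoly (f i)) \<Longrightarrow> ispoly (\<Sum>i\<in>S. f i)"
  by (induction S rule: infinite_finite_induct) (auto intro: ispoly_add)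

lemma Aset_ispoly: "a \<in> Aset \<alpha> \<Longrightarrow> ispoly (a n)"
proof (induction a arbitrary: n rule: Aset.induct)
  case (poly p) thus ?case by (auto simp: hel_def ispoly_def)
next
  case gen_x thus ?case by (auto simp: hel_def xq_def)
next
  case gen_y thus ?case by (auto simp: hel_def yq_def ispoly_def)
next
  case (add a b) thus ?case by (simp add: ispoly_add)
next
  case (mul a b) thus ?case unfolding qmul_def
    by (intro ispoly_sum ispoly_mult ispoly_sig) auto
qed

lemma fpol_nz: "fpol \<alpha> \<noteq> 0"
  by (simp add: fpol_def)

lemma Aset_hel_exists: "\<exists>w. w \<noteq> 0 \<and> hel w d \<in> Aset \<alpha>"
proof (cases "d \<ge> 0")
  case True
  then obtain k where d: "d = int k" by (metis nonneg_eq_int)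
  have "hel 1 (int k) \<in> Aset \<alpha>"
  proof (induction k)
    case 0 show ?case using Aset.poly[of 1 \<alpha>] by simp
  next
    case (Suc k)
    have "qmul xq (hel 1 (int k)) \<in> Aset \<alpha>" using Suc Aset.gen_x by (rule Aset.mul[rotated])
    thus ?case by (simp add: xq_def qmul_hel add.commute)
  qed
  thus ?thesis using d by (intro exI[of _ 1]) auto
next
  case False
  then obtain k where d: "d = - int k" by (metis nonpos_int_cases not_le less_imp_le)
  have "\<exists>w. w \<noteq> 0 \<and> hel w (- int k) \<in> Aset \<alpha>"
  proof (induction k)
    case 0 show ?case using Aset.poly[of 1 \<alpha>] by (intro exI[of _ 1]) simp
  next
    case (Suc k)
    then obtain w where w: "w \<noteq> 0" "hel w (- int k) \<in> Aset \<alpha>" by auto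
    have "qmul (yq \<alpha>) (hel w (- int k)) \<in> Aset \<alpha>" using Aset.gen_y w(2) by (rule Aset.mul)
    moreover have "qmul (yq \<alpha>) (hel w (- int k))
       = hel (sig (-1) (to_fract (fpol \<alpha>)) * sig (-1) w) (- int (Suc k))"
      by (simp add: yq_def qmul_hel)
    ultimately show ?case using w(1) fpol_nz by (intro exI[of _ "sig (-1) (to_fract (fpol \<alpha>)) * sig (-1) w"]) auto
  qed
  thus ?thesis using d by simp
qed

lemma Aset_deg: "\<exists>w. w \<noteq> 0 \<and> (\<forall>p. hel (to_fract p * w) d \<in> Aset \<alpha>)"
proof -
  obtain w where w: "w \<noteq> 0" "hel w d \<in> Aset \<alpha>" using Aset_hel_exists by blast
  have "hel (to_fract p * w) d \<in> Aset \<alpha>" for p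
  proof -
    have "qmul (hel (to_fract p) 0) (hel w d) \<in> Aset \<alpha>" using Aset.poly w(2) by (rule Aset.mul)
    thus ?thesis by (simp add: qmul_hel)
  qed
  thus ?thesis using w by blast
qed


lemma hel_mult: "hel (\<theta> * x) n = (\<lambda>k. \<theta> * hel x n k)"
  by (auto simp: hel_def)

lemma grsub_sum:
  assumes "grsub \<alpha> M" "\<And>i. i \<in> S \<Longrightarrow> f i \<in> M"
  shows "(\<Sum>i\<in>S. f i) \<in> M"
  using assms(2)
proof (induction S rule: infinite_finite_induct)
  case (infinite A)
  have z: "0 \<in> M" using assms(1) grsub_def by blast
  show ?case by (simp only: sum.infinite[OF infinite(1)] z)
next
  case empty
  have z: "0 \<in> M" using assms(1) grsub_def by blast
  show ?case by (simp only: sum.empty z)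
next
  case (insert x F)
  have e: "sum f (insert x F) = f x + sum f F" using insert(1,2) by (rule sum.insert)
  have "f x \<in> M" "sum f F \<in> M" using insert by auto
  thus ?case unfolding e using assms(1) unfolding grsub_def by blast
qed

lemma lmul_sum: fixes c :: "'k::field_char_0 rf" shows "(\<lambda>k. c * (\<Sum>i\<in>S. f i) k) = (\<Sum>i\<in>S. (\<lambda>k. c * f i k))"
  by (rule ext) (simp add: sum_fun_apply sum_distrib_left)

lemma grsub_lpoly:
  assumes M: "grsub \<alpha> M" and w: "w \<in> M"
  shows "(\<lambda>k. to_fract c * w k) \<in> M"
proof -
  have wq: "w \<in> Qgr" using M w by (auto simp: grsub_def)
  have "(\<lambda>k. to_fract c * w k) = (\<lambda>k. to_fract c * (\<Sum>n\<in>{n. w n \<noteq> 0}. hel (w n) n) k)"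
    using qgr_decomp[OF wq] by simp
  also have "\<dots> = (\<Sum>n\<in>{n. w n \<noteq> 0}. hel (to_fract c * w n) n)"
    by (simp add: lmul_sum hel_mult)
  also have "\<dots> \<in> M"
  proof (rule grsub_sum[OF M])
    fix n
    have "hel (w n) n \<in> M" using M w unfolding grsub_def by blast
    hence "qmul (hel (w n) n) (hel (to_fract (shiftp (-n) c)) 0) \<in> M"
      using M Aset.poly unfolding grsub_def by blast
    thus "hel (to_fract c * w n) n \<in> M" by (simp add: qmul_hel mult.commute)
  qed
  finally show ?thesis .
qed

lemma grsub_nzhom:
  assumes M: "grsub \<alpha> M" and nz: "M \<noteq> {0}"
  shows "\<exists>r m. r \<noteq> 0 \<and> hel r m \<in> M"
proof -
  obtain u where u: "u \<in> M" "u \<noteq> 0" using nz M by (auto simp: grsub_def)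
  then obtain m where m: "u m \<noteq> 0" by (auto simp: fun_eq_iff)
  have "hel (u m) m \<in> M" using M u unfolding grsub_def by blast
  thus ?thesis using m by blast
qed

lemma grsub_deg:
  assumes M: "grsub \<alpha> M" and nz: "M \<noteq> {0}"
  shows "\<exists>W. W \<noteq> 0 \<and> (\<forall>p. hel (to_fract p * W) n \<in> M)"
proof -
  obtain q0 n0 where q0: "q0 \<noteq> 0" "hel q0 n0 \<in> M" using grsub_nzhom[OF M nz] by blast
  obtain w where w: "w \<noteq> 0" "\<forall>p. hel (to_fract p * w) (n - n0) \<in> Aset \<alpha>"
    using Aset_deg by blast
  have "hel (to_fract p * (q0 * sig n0 w)) n \<in> M" for p
  proof -
    have "qmul (hel q0 n0) (hel (to_fract (shiftp (-n0) p) * w) (n - n0)) \<in> M"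
      using M q0 w by (auto simp: grsub_def)
    thus ?thesis by (simp add: qmul_hel sig_mult algebra_simps)
  qed
  thus ?thesis using q0 w by (intro exI[of _ "q0 * sig n0 w"]) auto
qed

lemma map_zero:
  assumes "grAmap \<alpha> qmul is_hom P qmul is_hom Q \<phi>" "0 \<in> P"
  shows "\<phi> 0 = 0"
proof -
  have "\<phi> (0 + 0) = \<phi> 0 + \<phi> 0" using assms unfolding grAmap_def by blast
  hence "\<phi> 0 = \<phi> 0 + \<phi> 0" by (metis add_0)
  thus ?thesis by (metis add_cancel_right_right)
qed

lemma map_sum:
  assumes h: "grAmap \<alpha> qmul is_hom P qmul is_hom Q \<phi>" and P: "grsub \<alpha> P"
    and f: "\<And>i. i \<in> S \<Longrightarrow> f i \<in> P" and fin: "finite S"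
  shows "\<phi> (\<Sum>i\<in>S. f i) = (\<Sum>i\<in>S. \<phi> (f i))"
  using fin f
proof (induction S rule: finite_induct)
  case empty
  have "\<phi> 0 = 0" using map_zero[OF h] P grsub_def by blast
  thus ?case by (simp only: sum.empty)
next
  case (insert x F)
  have s: "(\<Sum>i\<in>F. f i) \<in> P" by (intro grsub_sum[OF P]) (use insert in auto)
  have fx: "f x \<in> P" using insert by auto
  have e: "sum f (insert x F) = f x + sum f F" using insert(1,2) by (rule sum.insert)
  have "\<phi> (f x + sum f F) = \<phi> (f x) + \<phi> (sum f F)" using h s fx unfolding grAmap_def by blast
  moreover have ih: "\<phi> (sum f F) = (\<Sum>i\<in>F. \<phi> (f i))" by (rule insert.IH) (use insert.prems in auto)
  ultimately show ?case by (simp only: e sum.insert[OF insert(1,2)])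
qed


lemma hom_mult:
  assumes P: "grsub \<alpha> P" and Pnz: "P \<noteq> {0}"
    and h: "grAmap \<alpha> qmul is_hom P qmul is_hom Q \<phi>"
  shows "\<exists>\<theta>. \<forall>u\<in>P. \<phi> u = (\<lambda>k. \<theta> * u k)"
proof -
  obtain r m where r: "r \<noteq> 0" "hel r m \<in> P" using grsub_nzhom[OF P Pnz] by blast
  have "is_hom m (\<phi> (hel r m))" using h r is_hom_hel2 unfolding grAmap_def by blast
  hence phr: "\<phi> (hel r m) = hel (\<phi> (hel r m) m) m" by (rule is_hom_hel)
  define t0 where "t0 = \<phi> (hel r m) m"
  define \<theta> where "\<theta> = t0 / r"
  have homog: "\<phi> (hel s n) = hel (\<theta> * s) n" if sP: "hel s n \<in> P" for s n
  proof (cases "s = 0")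
    case True
    have "\<phi> 0 = 0" using map_zero[OF h] P grsub_def by blast
    thus ?thesis using True by simp
  next
    case False
    obtain w where w: "w \<noteq> 0" "\<forall>p. hel (to_fract p * w) (n - m) \<in> Aset \<alpha>"
      using Aset_deg by blast
    obtain a b where K: "s / (r * sig m w) = Fract a b" "b \<noteq> 0" by (cases "s / (r * sig m w)")
    have tb: "to_fract b \<noteq> 0" using K(2) by simp
    have rw: "r * sig m w \<noteq> 0" using r w by simp
    have "to_fract a = s / (r * sig m w) * to_fract b"
      using K tb by (simp add: Fract_conv_to_fract)
    hence key: "r * (to_fract a * sig m w) = s * to_fract b"
      using rw by (simp add: field_simps)
    define aa where "aa = hel (to_fract (shiftp (-m) a) * w) (n - m)"
    define bb where "bb = hel (to_fract (shiftp (-n) b)) (0::int)"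
    have aaA: "aa \<in> Aset \<alpha>" using w aa_def by simp
    have bbA: "bb \<in> Aset \<alpha>" unfolding bb_def by (rule Aset.poly)
    have e1: "qmul (hel r m) aa = hel (r * (to_fract a * sig m w)) n"
      by (simp add: aa_def qmul_hel sig_mult)
    have e2: "qmul (hel s n) bb = hel (s * to_fract b) n"
      by (simp add: bb_def qmul_hel)
    have "is_hom n (\<phi> (hel s n))" using h sP is_hom_hel2 unfolding grAmap_def by blast
    hence phs: "\<phi> (hel s n) = hel (\<phi> (hel s n) n) n" by (rule is_hom_hel)
    define t where "t = \<phi> (hel s n) n"
    have "\<phi> (qmul (hel r m) aa) = qmul (\<phi> (hel r m)) aa" using h r aaA unfolding grAmap_def by blast
    also have "\<dots> = hel (t0 * (to_fract a * sig m w)) n"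
      using phr by (simp add: t0_def[symmetric] aa_def qmul_hel sig_mult)
    finally have f1: "\<phi> (qmul (hel r m) aa) = hel (t0 * (to_fract a * sig m w)) n" .
    have "\<phi> (qmul (hel s n) bb) = qmul (\<phi> (hel s n)) bb" using h sP bbA unfolding grAmap_def by blast
    also have "\<dots> = hel (t * to_fract b) n"
      using phs by (simp add: t_def[symmetric] bb_def qmul_hel)
    finally have f2: "\<phi> (qmul (hel s n) bb) = hel (t * to_fract b) n" .
    have "hel (t0 * (to_fract a * sig m w)) n = hel (t * to_fract b) n"
      using f1 f2 e1 e2 key by simp
    hence "t0 * (to_fract a * sig m w) = t * to_fract b"
      by (metis hel_def)
    hence E: "t * to_fract b = t0 * (to_fract a * sig m w)" by simp
    have "(r * t) * to_fract b = (s * t0) * to_fract b"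
    proof -
      have "(r * t) * to_fract b = t0 * (r * (to_fract a * sig m w))"
        using E by (metis mult.assoc mult.left_commute)
      also have "\<dots> = (s * t0) * to_fract b" using key by (simp add: algebra_simps)
      finally show ?thesis .
    qed
    hence "r * t = s * t0" using tb by simp
    hence "t = \<theta> * s" using r by (simp add: \<theta>_def field_simps)
    thus ?thesis using phs t_def by simp
  qed
  have "\<phi> u = (\<lambda>k. \<theta> * u k)" if uP: "u \<in> P" for u
  proof -
    have uq: "u \<in> Qgr" using P uP by (auto simp: grsub_def)
    have fin: "finite {n. u n \<noteq> 0}" using uq by (simp add: Qgr_def)
    have mem: "\<And>n. hel (u n) n \<in> P" using P uP unfolding grsub_def by blast
    have "\<phi> u = \<phi> (\<Sum>n\<in>{n. u n \<noteq> 0}. hel (u n) n)" using qgr_decomp[OF uq] by simp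
    also have "\<dots> = (\<Sum>n\<in>{n. u n \<noteq> 0}. \<phi> (hel (u n) n))"
      by (rule map_sum[OF h P mem fin])
    also have "\<dots> = (\<Sum>n\<in>{n. u n \<noteq> 0}. hel (\<theta> * u n) n)"
      using homog mem by simp
    also have "\<dots> = (\<lambda>k. \<theta> * (\<Sum>n\<in>{n. u n \<noteq> 0}. hel (u n) n) k)"
      by (simp add: lmul_sum hel_mult)
    also have "\<dots> = (\<lambda>k. \<theta> * u k)" using qgr_decomp[OF uq] by simp
    finally show ?thesis .
  qed
  thus ?thesis by blast
qed


definition Iset :: "'k::field_char_0 qgr set \<Rightarrow> 'k qgr set \<Rightarrow> 'k rf set" where
  "Iset P Q = {\<theta>. \<forall>u\<in>P. (\<lambda>k. \<theta> * u k) \<in> Q}"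

lemma mult_map:
  assumes "\<theta> \<in> Iset P Q"
  shows "grAmap \<alpha> qmul is_hom P qmul is_hom Q (\<lambda>u. (\<lambda>k. \<theta> * u k))"
  using assms unfolding grAmap_def Iset_def
  by (auto simp: qmul_lmul is_hom_def distrib_left fun_eq_iff)

lemma Iset_add:
  assumes Q: "grsub \<alpha> Q" and a: "a \<in> Iset P Q" and b: "b \<in> Iset P Q"
  shows "a + b \<in> Iset P Q"
proof -
  have "(\<lambda>k. (a + b) * u k) \<in> Q" if u: "u \<in> P" for u
  proof -
    have "(\<lambda>k. (a + b) * u k) = (\<lambda>k. a * u k) + (\<lambda>k. b * u k)"
      by (simp add: fun_eq_iff distrib_right)
    moreover have "(\<lambda>k. a * u k) \<in> Q" "(\<lambda>k. b * u k) \<in> Q" using a b u by (auto simp: Iset_def)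
    ultimately show ?thesis using Q unfolding grsub_def by metis
  qed
  thus ?thesis by (simp add: Iset_def)
qed

lemma Iset_pmul:
  assumes Q: "grsub \<alpha> Q" and a: "a \<in> Iset P Q"
  shows "to_fract c * a \<in> Iset P Q"
proof -
  have "(\<lambda>k. (to_fract c * a) * u k) \<in> Q" if u: "u \<in> P" for u
  proof -
    have "(\<lambda>k. a * u k) \<in> Q" using a u by (auto simp: Iset_def)
    from grsub_lpoly[OF Q this, of c] show ?thesis by (simp add: mult.assoc)
  qed
  thus ?thesis by (simp add: Iset_def)
qed

lemma common_denom:
  fixes S :: "'k::field_char_0 rf set"
  assumes "finite S"
  shows "\<exists>D. D \<noteq> 0 \<and> (\<forall>x\<in>S. \<exists>p. to_fract D * x = to_fract p)"
  using assms
proof (induction S rule: finite_induct)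
  case empty thus ?case by (intro exI[of _ 1]) auto
next
  case (insert x F)
  then obtain D where D: "D \<noteq> 0" "\<forall>y\<in>F. \<exists>p. to_fract D * y = to_fract p" by blast
  obtain a b where x: "x = Fract a b" "b \<noteq> 0" by (cases x)
  have "\<exists>p. to_fract (D * b) * y = to_fract p" if yin: "y \<in> insert x F" for y
  proof (cases "y = x")
    case True
    have "to_fract (D * b) * y = to_fract (D * a)"
      using True x by (simp add: Fract_conv_to_fract)
    thus ?thesis by blast
  next
    case False
    then obtain p where "to_fract D * y = to_fract p" using D yin False by auto
    hence "to_fract (D * b) * y = to_fract (p * b)" by (simp add: algebra_simps)
    thus ?thesis by blast
  qed
  thus ?case using D x by (intro exI[of _ "D * b"]) auto
qed


lemma lmul_decomp:
  fixes \<theta> :: "'k::field_char_0 rf"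
  assumes "g \<in> Qgr"
  shows "(\<lambda>k. \<theta> * g k) = (\<Sum>n\<in>{n. g n \<noteq> 0}. hel (\<theta> * g n) n)"
proof -
  have "(\<lambda>k. \<theta> * g k) = (\<lambda>k. \<theta> * (\<Sum>n\<in>{n. g n \<noteq> 0}. hel (g n) n) k)"
    using qgr_decomp[OF assms] by simp
  also have "\<dots> = (\<Sum>n\<in>{n. g n \<noteq> 0}. hel (\<theta> * g n) n)"
    by (simp add: lmul_sum hel_mult)
  finally show ?thesis .
qed

lemma Iset_nonzero:
  assumes P: "grsub \<alpha> P" and fg: "fin_gen \<alpha> P" and Q: "grsub \<alpha> Q" and Qnz: "Q \<noteq> {0}"
  shows "\<exists>\<theta>. \<theta> \<noteq> 0 \<and> \<theta> \<in> Iset P Q"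
proof -
  obtain G where G: "finite G" "G \<subseteq> P"
    "P = {(\<Sum>g\<in>G. qmul g (c g)) | c. \<forall>g\<in>G. c g \<in> Aset \<alpha>}"
    using fg unfolding fin_gen_def by blast
  have "\<forall>n. \<exists>W. W \<noteq> 0 \<and> (\<forall>p. hel (to_fract p * W) n \<in> Q)"
    using grsub_deg[OF Q Qnz] by blast
  then obtain W where W: "\<And>n. W n \<noteq> 0" "\<And>n p. hel (to_fract p * W n) n \<in> Q" by metis
  have GQ: "g \<in> Qgr" if "g \<in> G" for g using that G(2) P by (auto simp: grsub_def)
  define S where "S = (\<lambda>(g, n). g n / W n) ` (SIGMA g:G. {n. g n \<noteq> 0})"
  have "finite S" unfolding S_def
    using G(1) GQ by (intro finite_imageI finite_SigmaI) (auto simp: Qgr_def)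
  then obtain D where D: "D \<noteq> 0" "\<forall>x\<in>S. \<exists>p. to_fract D * x = to_fract p"
    using common_denom by blast
  define \<theta> where "\<theta> = to_fract D"
  have gQ: "(\<lambda>k. \<theta> * g k) \<in> Q" if g: "g \<in> G" for g
  proof -
    have "(\<Sum>n\<in>{n. g n \<noteq> 0}. hel (\<theta> * g n) n) \<in> Q"
    proof (rule grsub_sum[OF Q])
      fix n assume n: "n \<in> {n. g n \<noteq> 0}"
      hence "g n / W n \<in> S" using g unfolding S_def by force
      then obtain p where "to_fract D * (g n / W n) = to_fract p" using D by blast
      hence "\<theta> * g n = to_fract p * W n" using W(1)[of n] unfolding \<theta>_def
        by (simp add: field_simps)
      thus "hel (\<theta> * g n) n \<in> Q" using W(2) by simp
    qed
    thus ?thesis using lmul_decomp[OF GQ[OF g]] by simp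
  qed
  have "(\<lambda>k. \<theta> * u k) \<in> Q" if u: "u \<in> P" for u
  proof -
    obtain c where c: "u = (\<Sum>g\<in>G. qmul g (c g))" "\<forall>g\<in>G. c g \<in> Aset \<alpha>"
      using u G(3) by blast
    have "(\<lambda>k. \<theta> * u k) = (\<Sum>g\<in>G. (\<lambda>k. \<theta> * qmul g (c g) k))"
      unfolding c(1) by (rule lmul_sum)
    also have "\<dots> = (\<Sum>g\<in>G. qmul (\<lambda>k. \<theta> * g k) (c g))"
      by (simp add: qmul_lmul)
    also have "\<dots> \<in> Q"
    proof (rule grsub_sum[OF Q])
      fix g assume "g \<in> G"
      thus "qmul (\<lambda>k. \<theta> * g k) (c g) \<in> Q" using gQ c(2) Q unfolding grsub_def by blast
    qed
    finally show ?thesis .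
  qed
  thus ?thesis using D unfolding Iset_def \<theta>_def by (intro exI[of _ "to_fract D"]) auto
qed

lemma Iset_bounded:
  assumes P: "grsub \<alpha> P" and Pnz: "P \<noteq> {0}" and Q: "grsub \<alpha> Q" and fg: "fin_gen \<alpha> Q"
  shows "\<exists>D. D \<noteq> 0 \<and> (\<forall>\<theta>\<in>Iset P Q. \<exists>p. to_fract D * \<theta> = to_fract p)"
proof -
  obtain r m where r: "r \<noteq> 0" "hel r m \<in> P" using grsub_nzhom[OF P Pnz] by blast
  obtain G where G: "finite G" "G \<subseteq> Q"
    "Q = {(\<Sum>g\<in>G. qmul g (c g)) | c. \<forall>g\<in>G. c g \<in> Aset \<alpha>}"
    using fg unfolding fin_gen_def by blast
  have GQ: "g \<in> Qgr" if "g \<in> G" for g using that G(2) Q by (auto simp: grsub_def)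
  define S where "S = (\<lambda>(g, n). g n) ` (SIGMA g:G. {n. g n \<noteq> 0})"
  have "finite S" unfolding S_def
    using G(1) GQ by (intro finite_imageI finite_SigmaI) (auto simp: Qgr_def)
  then obtain D1 where D1: "D1 \<noteq> 0" "\<forall>x\<in>S. \<exists>p. to_fract D1 * x = to_fract p"
    using common_denom by blast
  obtain a b where rab: "r = Fract a b" "b \<noteq> 0" by (cases r)
  have a0: "a \<noteq> 0" using r(1) rab by (auto simp: eq_fract Zero_fract_def)
  have "\<exists>p. to_fract (D1 * a) * \<theta> = to_fract p" if th: "\<theta> \<in> Iset P Q" for \<theta>
  proof -
    have "(\<lambda>k. \<theta> * hel r m k) \<in> Q" using th r unfolding Iset_def by blast
    then obtain c where c: "(\<lambda>k. \<theta> * hel r m k) = (\<Sum>g\<in>G. qmul g (c g))" "\<forall>g\<in>G. c g \<in> Aset \<alpha>"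
      using G(3) by blast
    have "\<theta> * r = (\<Sum>g\<in>G. qmul g (c g)) m"
      using fun_cong[OF c(1), of m] by (simp add: hel_def)
    hence e: "to_fract D1 * (\<theta> * r) =
      (\<Sum>g\<in>G. \<Sum>k\<in>{k. g k \<noteq> 0}. (to_fract D1 * g k) * sig k (c g (m - k)))"
      by (simp add: sum_fun_apply qmul_def sum_distrib_left mult.assoc)
    have "ispoly (to_fract D1 * (\<theta> * r))"
      unfolding e
    proof (rule ispoly_sum, rule ispoly_sum)
      fix g k assume g: "g \<in> G" and k: "k \<in> {k. g k \<noteq> 0}"
      hence "g k \<in> S" unfolding S_def by force
      hence "ispoly (to_fract D1 * g k)" using D1 by (auto simp: ispoly_def)
      moreover have "ispoly (c g (m - k))" using c(2) g Aset_ispoly by blast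
      ultimately show "ispoly (to_fract D1 * g k * sig k (c g (m - k)))"
        by (rule ispoly_mult[OF _ ispoly_sig])
    qed
    then obtain p where p: "to_fract D1 * (\<theta> * r) = to_fract p" by (auto simp: ispoly_def)
    have tb: "to_fract b \<noteq> 0" using rab by simp
    have "to_fract (D1 * a) * \<theta> = to_fract (p * b)"
      using p tb unfolding rab by (simp add: Fract_conv_to_fract field_simps)
    thus ?thesis by blast
  qed
  thus ?thesis using D1 a0 by (intro exI[of _ "D1 * a"]) auto
qed


lemma Iset_principal:
  assumes P: "grsub \<alpha> P" and Pnz: "P \<noteq> {0}" and fP: "fin_gen \<alpha> P"
    and Q: "grsub \<alpha> Q" and Qnz: "Q \<noteq> {0}" and fQ: "fin_gen \<alpha> Q"
  shows "\<exists>\<theta>0. \<theta>0 \<noteq> 0 \<and> \<theta>0 \<in> Iset P Q \<and> (\<forall>\<theta>\<in>Iset P Q. \<exists>c. \<theta> = to_fract c * \<theta>0)"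
proof -
  obtain D where D: "D \<noteq> 0" "\<forall>\<theta>\<in>Iset P Q. \<exists>p. to_fract D * \<theta> = to_fract p"
    using Iset_bounded[OF P Pnz Q fQ] by blast
  obtain \<theta>1 where t1: "\<theta>1 \<noteq> 0" "\<theta>1 \<in> Iset P Q" using Iset_nonzero[OF P fP Q Qnz] by blast
  define J where "J = {p. \<exists>\<theta>\<in>Iset P Q. to_fract D * \<theta> = to_fract p}"
  obtain p1 where p1: "to_fract D * \<theta>1 = to_fract p1" using D t1 by blast
  have "p1 \<in> J" "p1 \<noteq> 0" using p1 t1 D unfolding J_def by auto
  hence ex: "\<exists>n. \<exists>p\<in>J. p \<noteq> 0 \<and> degree p = n" by blast
  define n0 where "n0 = (LEAST n. \<exists>p\<in>J. p \<noteq> 0 \<and> degree p = n)"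
  obtain g where g: "g \<in> J" "g \<noteq> 0" "degree g = n0"
    using LeastI_ex[OF ex] unfolding n0_def by blast
  have minl: "n0 \<le> degree p" if "p \<in> J" "p \<noteq> 0" for p
    unfolding n0_def using that by (intro Least_le) blast
  obtain \<theta>0 where t0: "\<theta>0 \<in> Iset P Q" "to_fract D * \<theta>0 = to_fract g"
    using g(1) unfolding J_def by blast
  have t0nz: "\<theta>0 \<noteq> 0" using t0 g(2) by auto
  have "\<exists>c. \<theta> = to_fract c * \<theta>0" if th: "\<theta> \<in> Iset P Q" for \<theta>
  proof -
    obtain p where p: "to_fract D * \<theta> = to_fract p" using D th by blast
    define q where "q = p div g"
    define rr where "rr = p mod g"
    have pq: "p = q * g + rr" unfolding q_def rr_def by simp
    have "\<theta> + to_fract (-q) * \<theta>0 \<in> Iset P Q"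
      by (rule Iset_add[OF Q th Iset_pmul[OF Q t0(1)]])
    moreover have "to_fract D * (\<theta> + to_fract (-q) * \<theta>0) = to_fract rr"
      using p t0(2) pq by (simp add: algebra_simps)
    ultimately have "rr \<in> J" unfolding J_def by blast
    have "rr = 0"
    proof (rule ccontr)
      assume "rr \<noteq> 0"
      hence "degree rr < degree g" using degree_mod_less'[OF g(2)] rr_def by blast
      thus False using minl[OF \<open>rr \<in> J\<close> \<open>rr \<noteq> 0\<close>] g(3) by simp
    qed
    hence "to_fract D * \<theta> = to_fract D * (to_fract q * \<theta>0)"
      using p t0(2) pq by (simp add: algebra_simps)
    hence "\<theta> = to_fract q * \<theta>0" using D(1) by simp
    thus ?thesis by blast
  qed
  thus ?thesis using t0 t0nz by blast
qed


theorem proposition3p23: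
  fixes \<alpha> :: "'k::field_char_0" and P Q :: "'k qgr set"
  assumes alg_closed: "\<forall>p :: 'k poly. degree p > 0 \<longrightarrow> (\<exists>x. poly p x = 0)"
    and P: "rank_one_proj \<alpha> P" and Q: "rank_one_proj \<alpha> Q"
  shows "(\<forall>\<phi>\<in>HomGr \<alpha> P Q. \<exists>\<theta>. \<forall>u\<in>P. \<phi> u = qmul (hel \<theta> 0) u)
    \<and> (\<exists>\<phi>0\<in>HomGr \<alpha> P Q.
         (\<forall>c. (\<lambda>u. qmul (hel (to_fract c) 0) (\<phi>0 u)) \<in> HomGr \<alpha> P Q)
       \<and> (\<forall>\<phi>\<in>HomGr \<alpha> P Q. \<exists>!c. \<forall>u\<in>P. \<phi> u = qmul (hel (to_fract c) 0) (\<phi>0 u)))"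
proof -
  have Pg: "grsub \<alpha> P" and Pnz: "P \<noteq> {0}" and Pf: "fin_gen \<alpha> P"
    using P by (auto simp: rank_one_proj_def)
  have Qg: "grsub \<alpha> Q" and Qnz: "Q \<noteq> {0}" and Qf: "fin_gen \<alpha> Q"
    using Q by (auto simp: rank_one_proj_def)
  have part1: "\<exists>\<theta>. \<forall>u\<in>P. \<phi> u = (\<lambda>k. \<theta> * u k)" if "\<phi> \<in> HomGr \<alpha> P Q" for \<phi>
    using hom_mult[OF Pg Pnz] that by (simp add: HomGr_def)
  obtain \<theta>0 where t0: "\<theta>0 \<noteq> 0" "\<theta>0 \<in> Iset P Q" "\<forall>\<theta>\<in>Iset P Q. \<exists>c. \<theta> = to_fract c * \<theta>0"
    using Iset_principal[OF Pg Pnz Pf Qg Qnz Qf] by blast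
  define \<phi>0 where "\<phi>0 = (\<lambda>u. qmul (hel \<theta>0 0) u)"
  have phi0: "\<phi>0 = (\<lambda>u k. \<theta>0 * u k)" unfolding \<phi>0_def by (rule ext) (simp add: lmul_hel)
  have h0: "\<phi>0 \<in> HomGr \<alpha> P Q" unfolding phi0 HomGr_def using mult_map[OF t0(2)] by simp
  have hc: "(\<lambda>u. qmul (hel (to_fract c) 0) (\<phi>0 u)) \<in> HomGr \<alpha> P Q" for c
  proof -
    have "(\<lambda>u. qmul (hel (to_fract c) 0) (\<phi>0 u)) = (\<lambda>u k. (to_fract c * \<theta>0) * u k)"
      unfolding phi0 by (simp add: lmul_hel mult.assoc)
    thus ?thesis unfolding HomGr_def using mult_map[OF Iset_pmul[OF Qg t0(2)]] by simp
  qed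
  obtain r m where r: "r \<noteq> 0" "hel r m \<in> P" using grsub_nzhom[OF Pg Pnz] by blast
  have uniq: "\<exists>!c. \<forall>u\<in>P. \<phi> u = qmul (hel (to_fract c) 0) (\<phi>0 u)" if ph: "\<phi> \<in> HomGr \<alpha> P Q" for \<phi>
  proof -
    obtain \<theta> where th: "\<forall>u\<in>P. \<phi> u = (\<lambda>k. \<theta> * u k)" using part1[OF ph] by blast
    have "\<theta> \<in> Iset P Q" using th ph unfolding Iset_def HomGr_def grAmap_def by auto
    then obtain c where c: "\<theta> = to_fract c * \<theta>0" using t0(3) by blast
    have eq: "(\<forall>u\<in>P. \<phi> u = qmul (hel (to_fract c') 0) (\<phi>0 u)) \<longleftrightarrow>
        (\<forall>u\<in>P. (\<lambda>k. \<theta> * u k) = (\<lambda>k. to_fract c' * (\<theta>0 * u k)))" for c'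
      using th unfolding phi0 by (simp add: lmul_hel)
    show ?thesis
    proof (rule ex1I[of _ c])
      show "\<forall>u\<in>P. \<phi> u = qmul (hel (to_fract c) 0) (\<phi>0 u)"
        unfolding eq c by (simp add: mult.assoc)
    next
      fix c' assume "\<forall>u\<in>P. \<phi> u = qmul (hel (to_fract c') 0) (\<phi>0 u)"
      hence "(\<lambda>k. \<theta> * hel r m k) = (\<lambda>k. to_fract c' * (\<theta>0 * hel r m k))"
        unfolding eq using r by blast
      hence "\<theta> * r = to_fract c' * (\<theta>0 * r)" by (metis hel_def)
      hence "to_fract c * (\<theta>0 * r) = to_fract c' * (\<theta>0 * r)" unfolding c by (simp add: mult.assoc)
      thus "c' = c" using t0(1) r(1) by simp
    qed
  qed
  have p1: "\<forall>\<phi>\<in>HomGr \<alpha> P Q. \<exists>\<theta>. \<forall>u\<in>P. \<phi> u = qmul (hel \<theta> 0) u"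
    using part1 by (simp add: lmul_hel)
  show ?thesis
    using p1 h0 hc uniq by blast
qed

end
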